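(* Let $e_1,e_2,e_3$ be nonzero integers with $e_1+e_2+e_3=0$, let $n$ be a positive integer, and let $\Lambda=(d_1,d_2,d_3)$ be a triple of nonzero square-free integers with $d_1d_2d_3$ a square. Then $D^{(n)}_\Lambda(\mathbb{R})\neq\emptyset$ if and only if all of the following hold: $d_1>0$ if $e_2>0,e_3<0$; $d_2>0$ if $e_3>0,e_1<0$; $d_3>0$ if $e_1>0,e_2<0$.
   Context: $D^{(n)}_\Lambda$ is the curve in $\mathbb{P}^3$ with coordinates $(t,u_1,u_2,u_3)$ defined by the three equations $e_1nt^2+d_2u_2^2-d_3u_3^2=0$, $e_2nt^2+d_3u_3^2-d_1u_1^2=0$, $e_3nt^2+d_1u_1^2-d_2u_2^2=0$ (the 2-covering of $y^2=x(x-e_1n)(x+e_2n)$ attached to $\Lambda$). *)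

theory Defs
  imports Complex_Main "HOL-Computational_Algebra.Squarefree"
begin

text \<open>A real point is represented by a nonzero real vector (t,u1,u2,u3) satisfying
  the three homogeneous equations (projective points = nonzero solutions up to scaling).\<close>

definition D_eqs :: "int \<Rightarrow> int \<Rightarrow> int \<Rightarrow> int \<Rightarrow> int \<Rightarrow> int \<Rightarrow> int \<Rightarrow>
    real \<Rightarrow> real \<Rightarrow> real \<Rightarrow> real \<Rightarrow> bool" where
  "D_eqs e1 e2 e3 n d1 d2 d3 t u1 u2 u3 \<longleftrightarrow>
     real_of_int e1 * real_of_int n * t^2 + real_of_int d2 * u2^2 - real_of_int d3 * u3^2 = 0 \<and>
     real_of_int e2 * real_of_int n * t^2 + real_of_int d3 * u3^2 - real_of_int d1 * u1^2 = 0 \<and>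
     real_of_int e3 * real_of_int n * t^2 + real_of_int d1 * u1^2 - real_of_int d2 * u2^2 = 0"

definition D_real_points :: "int \<Rightarrow> int \<Rightarrow> int \<Rightarrow> int \<Rightarrow> int \<Rightarrow> int \<Rightarrow> int \<Rightarrow>
    (real \<times> real \<times> real \<times> real) set" where
  "D_real_points e1 e2 e3 n d1 d2 d3 =
     {(t, u1, u2, u3). (t, u1, u2, u3) \<noteq> (0, 0, 0, 0) \<and> D_eqs e1 e2 e3 n d1 d2 d3 t u1 u2 u3}"

end

theory Submission
  imports Defs
begin

lemma neg_of_mult_sq: "(d::real) * u^2 < 0 \<Longrightarrow> d < 0"
  by (metis mult_nonneg_nonneg not_le zero_le_power2)

lemma aux_only_if:
  fixes e1 e2 e3 n d1 d2 d3 :: int and t u1 u2 u3 :: real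
  assumes "e2 > 0" "e3 < 0" "n > 0" "d1 \<noteq> 0" "d2 \<noteq> 0" "d3 \<noteq> 0"
    and "d1 * d2 * d3 > 0"
    and "(t, u1, u2, u3) \<noteq> (0, 0, 0, 0)"
    and "D_eqs e1 e2 e3 n d1 d2 d3 t u1 u2 u3"
  shows "d1 > 0"
proof (rule ccontr)
  assume "\<not> d1 > 0"
  hence d1n: "real_of_int d1 < 0" using assms(4) by simp
  define s where "s = real_of_int n * t^2"
  define X1 where "X1 = real_of_int d1 * u1^2"
  define X2 where "X2 = real_of_int d2 * u2^2"
  define X3 where "X3 = real_of_int d3 * u3^2"
  have s0: "s \<ge> 0" using assms(3) unfolding s_def by simp
  have e2: "X2 = X1 + real_of_int e3 * s" "X3 = X1 - real_of_int e2 * s"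
    using assms(9) unfolding D_eqs_def X1_def X2_def X3_def s_def by (auto simp: algebra_simps)
  have X1: "X1 \<le> 0" unfolding X1_def using d1n by (simp add: mult_nonpos_nonneg)
  have le: "X2 \<le> X1" "X3 \<le> X1"
    using e2 s0 assms(1,2) by (auto simp: mult_nonneg_nonneg mult_nonpos_nonneg)
  have "X2 < 0 \<and> X3 < 0"
  proof (rule ccontr)
    assume "\<not> (X2 < 0 \<and> X3 < 0)"
    hence "X2 = 0 \<or> X3 = 0" using le X1 by linarith
    hence "X1 = 0" using le X1 by linarith
    have "real_of_int e3 * s = 0 \<or> real_of_int e2 * s = 0" using \<open>X1 = 0\<close> \<open>X2 = 0 \<or> X3 = 0\<close> e2 by auto
    hence "s = 0" using assms(1,2) by auto
    have "X2 = 0" "X3 = 0" using e2 \<open>X1 = 0\<close> \<open>s = 0\<close> by auto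
    hence "u1 = 0" "u2 = 0" "u3 = 0" "t = 0"
      using \<open>X1 = 0\<close> \<open>s = 0\<close> assms(3,4,5,6) unfolding X1_def X2_def X3_def s_def by auto
    thus False using assms(8) by simp
  qed
  hence "real_of_int d2 < 0" "real_of_int d3 < 0"
    unfolding X2_def X3_def using neg_of_mult_sq by blast+
  hence "d2 < 0" "d3 < 0" by simp_all
  hence "d1 * d2 * d3 < 0" using \<open>\<not> d1 > 0\<close> assms(4)
    by (auto simp: mult_less_0_iff zero_less_mult_iff)
  thus False using assms(7) by simp
qed

lemma constr:
  fixes e1 e2 e3 n d1 d2 d3 :: int and a :: real
  assumes "e1 + e2 + e3 = 0" "d1 \<noteq> 0" "d2 \<noteq> 0" "d3 \<noteq> 0"
    and "a / d1 \<ge> 0" "(a + e3 * n) / d2 \<ge> 0" "(a - e2 * n) / d3 \<ge> 0"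
  shows "D_real_points e1 e2 e3 n d1 d2 d3 \<noteq> {}"
proof -
  define u1 where "u1 = sqrt (a / d1)"
  define u2 where "u2 = sqrt ((a + e3 * n) / d2)"
  define u3 where "u3 = sqrt ((a - e2 * n) / d3)"
  have s1: "real_of_int d1 * u1^2 = a" unfolding u1_def using assms(2,5) by simp
  have s2: "real_of_int d2 * u2^2 = a + e3 * n" unfolding u2_def using assms(3,6) by simp
  have s3: "real_of_int d3 * u3^2 = a - e2 * n" unfolding u3_def using assms(4,7) by simp
  have "real_of_int (e1 + e2 + e3) = 0" using assms(1) by simp
  hence e: "real_of_int e1 = - real_of_int e2 - real_of_int e3" by simp
  have "D_eqs e1 e2 e3 n d1 d2 d3 1 u1 u2 u3"
    unfolding D_eqs_def s1 s2 s3 e by (simp add: algebra_simps)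
  hence "(1, u1, u2, u3) \<in> D_real_points e1 e2 e3 n d1 d2 d3"
    unfolding D_real_points_def by simp
  thus ?thesis by blast
qed

theorem lemma2p4:
  fixes e1 e2 e3 n d1 d2 d3 :: int
  assumes "e1 \<noteq> 0" "e2 \<noteq> 0" "e3 \<noteq> 0" "e1 + e2 + e3 = 0"
    and "n > 0"
    and "d1 \<noteq> 0" "d2 \<noteq> 0" "d3 \<noteq> 0"
    and "squarefree d1" "squarefree d2" "squarefree d3"
    and "\<exists>k::int. d1 * d2 * d3 = k^2"
  shows "D_real_points e1 e2 e3 n d1 d2 d3 \<noteq> {} \<longleftrightarrow>
           ((e2 > 0 \<and> e3 < 0 \<longrightarrow> d1 > 0) \<and>
            (e3 > 0 \<and> e1 < 0 \<longrightarrow> d2 > 0) \<and>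
            (e1 > 0 \<and> e2 < 0 \<longrightarrow> d3 > 0))"
proof -
  obtain k where k: "d1 * d2 * d3 = k^2" using assms(12) by blast
  have "d1 * d2 * d3 \<noteq> 0" using assms(6,7,8) by simp
  hence pos: "d1 * d2 * d3 > 0" using k by (metis less_le zero_le_power2)
  have pos2: "d2 * d3 * d1 > 0" "d3 * d1 * d2 > 0" using pos by (simp_all add: ac_simps)
  show ?thesis
  proof
    assume "D_real_points e1 e2 e3 n d1 d2 d3 \<noteq> {}"
    then obtain t u1 u2 u3 where p: "(t, u1, u2, u3) \<noteq> (0, 0, 0, 0)"
      "D_eqs e1 e2 e3 n d1 d2 d3 t u1 u2 u3"
      unfolding D_real_points_def by auto
    have p2: "D_eqs e2 e3 e1 n d2 d3 d1 t u2 u3 u1" "D_eqs e3 e1 e2 n d3 d1 d2 t u3 u1 u2"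
      using p(2) unfolding D_eqs_def by auto
    have q: "(t, u2, u3, u1) \<noteq> (0, 0, 0, 0)" "(t, u3, u1, u2) \<noteq> (0, 0, 0, 0)" using p(1) by auto
    show "((e2 > 0 \<and> e3 < 0 \<longrightarrow> d1 > 0) \<and>
            (e3 > 0 \<and> e1 < 0 \<longrightarrow> d2 > 0) \<and>
            (e1 > 0 \<and> e2 < 0 \<longrightarrow> d3 > 0))"
      using aux_only_if[OF _ _ assms(5) assms(6) assms(7) assms(8) pos p(1) p(2)]
        aux_only_if[OF _ _ assms(5) assms(7) assms(8) assms(6) pos2(1) q(1) p2(1)]
        aux_only_if[OF _ _ assms(5) assms(8) assms(6) assms(7) pos2(2) q(2) p2(2)]
      by blast
  next
    assume c: "((e2 > 0 \<and> e3 < 0 \<longrightarrow> d1 > 0) \<and>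
            (e3 > 0 \<and> e1 < 0 \<longrightarrow> d2 > 0) \<and>
            (e1 > 0 \<and> e2 < 0 \<longrightarrow> d3 > 0))"
    have signs: "(d1 > 0 \<and> d2 > 0 \<and> d3 > 0) \<or> (d1 > 0 \<and> d2 < 0 \<and> d3 < 0)
       \<or> (d1 < 0 \<and> d2 > 0 \<and> d3 < 0) \<or> (d1 < 0 \<and> d2 < 0 \<and> d3 > 0)"
      using pos assms(6,7,8)
      by (auto simp: mult_less_0_iff zero_less_mult_iff)
    have nr: "real_of_int n > 0" using assms(5) by simp
    from signs show "D_real_points e1 e2 e3 n d1 d2 d3 \<noteq> {}"
    proof (elim disjE)
      assume d: "d1 > 0 \<and> d2 > 0 \<and> d3 > 0"
      define a where "a = (\<bar>real_of_int e2\<bar> + \<bar>real_of_int e3\<bar>) * n"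
      have "a + e3 * n = (\<bar>real_of_int e2\<bar> + \<bar>real_of_int e3\<bar> + e3) * n"
        "a - e2 * n = (\<bar>real_of_int e2\<bar> + \<bar>real_of_int e3\<bar> - e2) * n"
        unfolding a_def by (simp_all add: algebra_simps)
      moreover have "(\<bar>real_of_int e2\<bar> + \<bar>real_of_int e3\<bar> + e3) * n \<ge> 0"
        "(\<bar>real_of_int e2\<bar> + \<bar>real_of_int e3\<bar> - e2) * n \<ge> 0" "a \<ge> 0"
        unfolding a_def using nr by (intro mult_nonneg_nonneg; simp)+
      ultimately have "a + e3 * n \<ge> 0" "a - e2 * n \<ge> 0" "a \<ge> 0" by simp_all
      then show ?thesis using d by (intro constr[OF assms(4,6,7,8), of a]) auto
    next
      assume d: "d1 > 0 \<and> d2 < 0 \<and> d3 < 0"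
      hence "e2 > 0" "e3 < 0" using c assms(1-4) by linarith+
      hence "real_of_int e3 * n \<le> 0" "real_of_int e2 * n \<ge> 0" using nr
        by (simp_all add: mult_nonpos_nonneg)
      then show ?thesis using d by (intro constr[OF assms(4,6,7,8), of 0])
          (auto simp: divide_nonpos_neg divide_nonneg_neg)
    next
      assume d: "d1 < 0 \<and> d2 > 0 \<and> d3 < 0"
      hence "e3 > 0" "e1 < 0" using c assms(1-4) by linarith+
      hence "real_of_int e3 * n \<ge> 0" "real_of_int e1 * n \<le> 0" using nr
        by (simp_all add: mult_nonpos_nonneg)
      moreover have "- real_of_int e3 * n - real_of_int e2 * n = real_of_int e1 * n"
      proof -
        have "real_of_int (e1 + e2 + e3) = 0" using assms(4) by simp
        hence h: "real_of_int e1 = - real_of_int e2 - real_of_int e3" by simp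
        show ?thesis unfolding h by (simp add: algebra_simps)
      qed
      ultimately show ?thesis using d by (intro constr[OF assms(4,6,7,8), of "- real_of_int e3 * n"])
          (auto simp: divide_nonpos_neg divide_nonneg_neg)
    next
      assume d: "d1 < 0 \<and> d2 < 0 \<and> d3 > 0"
      hence "e1 > 0" "e2 < 0" using c assms(1-4) by linarith+
      hence "real_of_int e2 * n \<le> 0" "real_of_int e1 * n \<ge> 0" using nr
        by (simp_all add: mult_nonpos_nonneg)
      moreover have "real_of_int e2 * n + real_of_int e3 * n = - real_of_int e1 * n"
      proof -
        have "real_of_int (e1 + e2 + e3) = 0" using assms(4) by simp
        hence h: "real_of_int e1 = - real_of_int e2 - real_of_int e3" by simp
        show ?thesis unfolding h by (simp add: algebra_simps)
      qed
      ultimately show ?thesis using d by (intro constr[OF assms(4,6,7,8), of "real_of_int e2 * n"])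
          (auto simp: divide_nonpos_neg divide_nonneg_neg)
    qed
  qed
qed

end
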